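(* Let $0<\theta<2\pi$ and define, for $x\ge\psi(\theta)=\frac{\theta-\sin\theta}{1-\cos\theta}$, $$v(\theta,x)=\frac{U(\theta,x)^2}{(\theta-\sin\theta)^2},\quad U(\theta,x)=\theta\cos\tfrac\theta2-2\sin\tfrac\theta2+\sqrt{N(\theta,x)},$$ $$N(\theta,x)=\sin^2\tfrac\theta2\big[2(\theta-\sin\theta)x+2(1-\cos\theta)-\theta^2\big].$$ Then the function $x\mapsto v(\theta,x)$ is strictly increasing and convex on $[\psi(\theta),\infty)$.
   Context: Nonnegative square roots are used. (In the paper, the graph of $x\mapsto v(\theta,x)$ on $[\psi(\theta),\infty)$ is the level set $\{(x,v):v\ge0,\ \delta(x,v)=\theta\}$ of the parameter $\delta$ of the Heston distance.) *)

theory Defs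
  imports "HOL-Analysis.Analysis"
begin

definition psi :: "real \<Rightarrow> real" where
  "psi \<theta> = (\<theta> - sin \<theta>) / (1 - cos \<theta>)"

definition NN :: "real \<Rightarrow> real \<Rightarrow> real" where
  "NN \<theta> x = (sin (\<theta>/2))^2 * (2 * (\<theta> - sin \<theta>) * x + 2 * (1 - cos \<theta>) - \<theta>^2)"

definition UU :: "real \<Rightarrow> real \<Rightarrow> real" where
  "UU \<theta> x = \<theta> * cos (\<theta>/2) - 2 * sin (\<theta>/2) + sqrt (NN \<theta> x)"

definition vv :: "real \<Rightarrow> real \<Rightarrow> real" where
  "vv \<theta> x = (UU \<theta> x)^2 / (\<theta> - sin \<theta>)^2"

end

theory Submission
  imports Defs
begin

lemma core:
  fixes a A B d p :: real
  assumes a: "a \<le> 0" and A: "A > 0" and d: "d \<noteq> 0" and p: "A*p + B = a^2"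
  shows "strict_mono_on {p..} (\<lambda>z. (a + sqrt (A*z+B))^2/d^2) \<and>
         convex_on {p..} (\<lambda>z. (a + sqrt (A*z+B))^2/d^2)"
proof
  have d2: "d^2 > 0" using d by simp
  have ge: "A*z+B \<ge> a^2" if "z \<ge> p" for z
    using p A that by (smt (verit) mult_left_mono)
  have sge: "a + sqrt (A*z+B) \<ge> 0" if "z \<ge> p" for z
  proof -
    have "sqrt (A*z+B) \<ge> sqrt (a^2)" using ge[OF that] real_sqrt_le_mono by blast
    then show ?thesis using a by simp
  qed
  show "strict_mono_on {p..} (\<lambda>z. (a + sqrt (A*z+B))^2/d^2)"
  proof (rule strict_mono_onI)
    fix x y assume xy: "x \<in> {p..}" "y \<in> {p..}" "x < y"
    have "A*x+B < A*y+B" using A xy by simp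
    then have "sqrt (A*x+B) < sqrt (A*y+B)" by (rule real_sqrt_less_mono)
    then have "(a + sqrt (A*x+B))^2 < (a + sqrt (A*y+B))^2"
      using sge[of x] xy by (intro power_strict_mono) auto
    then show "(a + sqrt (A*x+B))^2/d^2 < (a + sqrt (A*y+B))^2/d^2"
      using d2 by (simp add: divide_strict_right_mono)
  qed
  show "convex_on {p..} (\<lambda>z. (a + sqrt (A*z+B))^2/d^2)"
  proof (rule convex_onI)
    show "convex {p..}" by simp
    fix t x y :: real assume t: "0 < t" "t < 1" and xy: "x \<in> {p..}" "y \<in> {p..}"
    define P where "P = A*x+B"
    define Q where "Q = A*y+B"
    have P0: "P \<ge> 0" using ge[of x] xy unfolding P_def
      by (smt (verit) zero_le_power2 atLeast_iff)
    have Q0: "Q \<ge> 0" using ge[of y] xy unfolding Q_def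
      by (smt (verit) zero_le_power2 atLeast_iff)
    have M: "A*((1-t)*\<^sub>R x + t*\<^sub>R y)+B = (1-t)*P + t*Q"
      unfolding P_def Q_def by (simp add: algebra_simps)
    define M where "M = (1-t)*P + t*Q"
    have M0: "M \<ge> 0" unfolding M_def using P0 Q0 t by simp
    have conc: "(1-t)* sqrt P + t* sqrt Q \<le> sqrt M"
    proof -
      have "((1-t)* sqrt P + t* sqrt Q)^2 \<le> M"
      proof -
        have "((1-t)* sqrt P + t* sqrt Q)^2 = (1-t)^2*P + t^2*Q + 2*(1-t)*t*(sqrt P* sqrt Q)"
          using P0 Q0 by (simp add: power2_eq_square algebra_simps)
        also have "M - \<dots> = (1-t)*t*(sqrt P - sqrt Q)^2"
          unfolding M_def using P0 Q0 by (simp add: power2_eq_square algebra_simps)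
        finally show ?thesis using t by (smt (verit) mult_nonneg_nonneg zero_le_power2)
      qed
      then show ?thesis using real_le_rsqrt by blast
    qed
    have e: "(a + sqrt Z)^2 = a^2 + Z + 2*a* sqrt Z" if "Z \<ge> 0" for Z
      using that by (simp add: power2_eq_square algebra_simps)
    have "(a + sqrt M)^2 \<le> (1-t)*(a + sqrt P)^2 + t*(a + sqrt Q)^2"
    proof -
      have "2*a* sqrt M \<le> 2*a*((1-t)* sqrt P + t* sqrt Q)"
        using conc a by (simp add: mult_left_mono_neg)
      then show ?thesis using e[OF M0] e[OF P0] e[OF Q0] unfolding M_def
        by (simp add: algebra_simps)
    qed
    then have "(a + sqrt M)^2/d^2 \<le> ((1-t)*(a + sqrt P)^2 + t*(a + sqrt Q)^2)/d^2"
      using d2 by (simp add: divide_right_mono)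
    then show "(a + sqrt (A*((1-t)*\<^sub>R x + t*\<^sub>R y)+B))^2/d^2
          \<le> (1-t)*((a + sqrt (A*x+B))^2/d^2) + t*((a + sqrt (A*y+B))^2/d^2)"
      unfolding M M_def[symmetric] P_def[symmetric] Q_def[symmetric]
      by (simp add: add_divide_distrib)
  qed
qed

theorem lemma2p7:
  fixes \<theta> :: real
  assumes "0 < \<theta>" and "\<theta> < 2 * pi"
  shows "strict_mono_on {psi \<theta>..} (vv \<theta>) \<and> convex_on {psi \<theta>..} (vv \<theta>)"
proof -
  define t where "t = \<theta>/2"
  define s where "s = sin t"
  define c where "c = cos t"
  have th: "\<theta> = 2*t" unfolding t_def by simp
  have t0: "0 < t" "t < pi" using assms unfolding t_def by auto
  have s0: "s > 0" unfolding s_def using sin_gt_zero t0 by blast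
  have sc: "s^2 + c^2 = 1" unfolding s_def c_def by simp
  have sinth: "sin \<theta> = 2* s*c" unfolding th s_def c_def by (simp add: sin_double)
  have costh: "cos \<theta> = 1 - 2* s^2" unfolding th s_def c_def
    by (simp add: cos_double_sin)
  have c1: "c < 1"
  proof -
    have "c^2 < 1" using sc s0 by (smt (verit) zero_less_power)
    then show ?thesis by (smt (verit) one_le_power)
  qed
  have st: "s \<le> t" unfolding s_def using sin_x_le_x t0 by simp
  define d where "d = \<theta> - sin \<theta>"
  have dpos: "d > 0"
  proof -
    have "s*c < s" using c1 s0 by simp
    then show ?thesis unfolding d_def sinth using st th by simp
  qed
  define a where "a = \<theta> * c - 2 * s"
  have aneg: "a \<le> 0"
  proof -
    have "(\<lambda>u. sin u - u * cos u) 0 < (\<lambda>u. sin u - u * cos u) t"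
    proof (rule DERIV_pos_imp_increasing_open[OF t0(1)])
      fix x assume x: "0 < x" "x < t"
      show "\<exists>y. ((\<lambda>u. sin u - u * cos u) has_real_derivative y) (at x) \<and> 0 < y"
        apply (rule exI[of _ "x * sin x"])
        apply (intro conjI)
         apply (auto intro!: derivative_eq_intros)[1]
        using x t0 sin_gt_zero[of x] by simp
    next
      show "continuous_on {0..t} (\<lambda>u. sin u - u * cos u)"
        by (intro continuous_intros)
    qed
    then show ?thesis unfolding a_def th s_def c_def by simp
  qed
  define A where "A = 2* s^2*d"
  define B where "B = s^2*(4* s^2 - \<theta>^2)"
  have Apos: "A > 0" unfolding A_def using s0 dpos by simp
  have psi: "psi \<theta> = d/(2* s^2)" unfolding psi_def d_def costh by simp
  have key: "A * psi \<theta> + B = a^2"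
  proof -
    have "A * psi \<theta> + B = d^2 + s^2*(4* s^2 - \<theta>^2)"
      unfolding psi A_def B_def using s0 by (simp add: power2_eq_square)
    also have "\<dots> = a^2"
    proof -
      have "d^2 + s^2*(4* s^2 - \<theta>^2) - a^2 = (\<theta>^2 - 4* s^2)*(1 - s^2 - c^2)"
        unfolding d_def a_def sinth by (simp add: power2_eq_square algebra_simps)
      moreover have "1 - s^2 - c^2 = 0" using sc by simp
      ultimately show ?thesis by simp
    qed
    finally show ?thesis .
  qed
  have vv: "vv \<theta> = (\<lambda>z. (a + sqrt (A*z+B))^2/d^2)"
  proof
    fix z
    have "NN \<theta> z = A*z+B" unfolding NN_def A_def B_def costh d_def s_def t_def
      by (simp add: algebra_simps power2_eq_square)
    then show "vv \<theta> z = (a + sqrt (A*z+B))^2/d^2"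
      unfolding vv_def UU_def a_def d_def c_def s_def t_def by simp
  qed
  show ?thesis unfolding vv using core[OF aneg Apos _ key] dpos by simp
qed

end
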